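(* For every integer $n\ge1$, $$\frac{\beta(n)}{n}=\frac{\pi^2}{15}\sum_{r=1}^{\infty}\frac{\lambda(r)}{r^2}c_r(n),$$ the series being absolutely convergent.
   Context: $\lambda(n)=(-1)^{\Omega(n)}$ is the Liouville function, $\Omega(n)$ being the number of prime factors of $n$ counted with multiplicity. $\beta(n)=\sum_{d\mid n}d\,\lambda(n/d)$ (equivalently, $\beta$ is multiplicative with $\beta(p^a)=\frac{p^{a+1}+(-1)^a}{p+1}$). $c_r(n)$ is the Ramanujan sum, the sum of the $n$-th powers of the primitive $r$-th roots of unity. *)

theory Defs
  imports "HOL-Analysis.Analysis" "HOL-Computational_Algebra.Primes"
begin

definition liouville :: "nat \<Rightarrow> real" where
  "liouville n = (-1) ^ size (prime_factorization n)"

definition beta :: "nat \<Rightarrow> real" where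
  "beta n = (\<Sum>d | d dvd n. real d * liouville (n div d))"

definition ramanujan_sum :: "nat \<Rightarrow> nat \<Rightarrow> complex" where
  "ramanujan_sum r n =
     (\<Sum>k | k \<in> {1..r} \<and> coprime k r. (cis (2 * pi * real k / real r)) ^ n)"

end

theory Submission
  imports Defs "HOL-Real_Asymp.Real_Asymp" "HOL-Computational_Algebra.Squarefree"
begin


lemma z2_sums: "(\<lambda>n. 1 / real (Suc n)^2) sums (pi^2/6)"
  using inverse_squares_sums by (simp add: add.commute)

lemma z2_summable: "summable (\<lambda>n. 1 / real (Suc n)^2)"
  using z2_sums sums_summable by blast

definition PP :: "real \<Rightarrow> nat \<Rightarrow> real" where
  "PP x n = (\<Prod>k=1..n. 1 - x^2 / of_nat k^2)"
definition RR :: "real \<Rightarrow> nat \<Rightarrow> real" where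
  "RR x n = (\<Sum>k<n. PP x k / of_nat (Suc k)^2)"

lemma PP_Suc: "PP x (Suc n) = PP x n * (1 - x^2 / of_nat (Suc n)^2)"
  unfolding PP_def by (subst prod.nat_ivl_Suc') (auto simp: mult.commute)

lemma PP_RR: "PP x n = 1 - x^2 * RR x n"
proof (induction n)
  case 0 then show ?case by (simp add: PP_def RR_def)
next
  case (Suc n)
  have "PP x (Suc n) = PP x n - x^2 * (PP x n / of_nat (Suc n)^2)"
    by (simp add: PP_Suc algebra_simps)
  also have "\<dots> = 1 - x^2 * RR x (Suc n)"
    using Suc by (simp add: RR_def algebra_simps)
  finally show ?case .
qed

lemma PP_bounds:
  assumes "\<bar>x\<bar> < 1"
  shows "0 \<le> PP x n \<and> PP x n \<le> 1"
proof -
  have "\<And>k. k \<in> {1..n} \<Longrightarrow> 0 \<le> 1 - x^2 / of_nat k^2 \<and> 1 - x^2 / of_nat k^2 \<le> 1"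
  proof -
    fix k assume k: "k \<in> {1..n}"
    have "x^2 < 1" using assms by (simp add: abs_square_less_1)
    also have "1 \<le> (of_nat k::real)^2" using k by simp
    finally have "x^2 / of_nat k^2 \<le> 1" using k by simp
    moreover have "0 \<le> x^2 / of_nat k^2" by simp
    ultimately show "0 \<le> 1 - x^2 / of_nat k^2 \<and> 1 - x^2 / of_nat k^2 \<le> 1" by linarith
  qed
  then show ?thesis unfolding PP_def
    by (auto intro!: prod_nonneg prod_le_1)
qed

lemma RR_bounds:
  assumes "\<bar>x\<bar> < 1"
  shows "0 \<le> RR x n \<and> RR x n \<le> pi^2/6"
proof -
  have "RR x n \<le> (\<Sum>k<n. 1 / real (Suc k)^2)"
    unfolding RR_def using PP_bounds[OF assms]
    by (intro sum_mono) (simp add: divide_right_mono)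
  also have "\<dots> \<le> pi^2/6"
    using sum_le_suminf[OF z2_summable, of "{..<n}"] z2_sums by (simp add: sums_iff)
  finally show ?thesis unfolding RR_def using PP_bounds[OF assms]
    by (auto intro!: sum_nonneg)
qed

lemma PP_sums:
  assumes x: "x \<noteq> 0"
  shows "(\<lambda>n. PP x n / of_nat (Suc n)^2) sums ((1 - sin (pi * x) / (pi * x)) / x^2)"
proof -
  have "(\<lambda>n. PP x n - PP x (Suc n)) sums (PP x 0 - sin (pi * x) / (pi * x))"
    unfolding PP_def using x by (intro telescope_sums' sin_product_formula_real')
  also have "(\<lambda>n. PP x n - PP x (Suc n)) = (\<lambda>n. (x^2 / of_nat (Suc n)^2) * PP x n)"
    by (rule ext) (simp add: PP_Suc algebra_simps)
  also have "PP x 0 = 1" by (simp add: PP_def)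
  finally have "(\<lambda>n. x\<^sup>2 / (of_nat (Suc n))\<^sup>2 * PP x n) sums (1 - sin (pi * x) / (pi * x))" .
  from sums_divide[OF this, of "x^2"] x show ?thesis by simp
qed

definition FF :: "real \<Rightarrow> real" where
  "FF x = (\<Sum>n. RR x n / of_nat (Suc n)^2)"

lemma RR_term_bound:
  assumes "\<bar>x\<bar> < 1"
  shows "norm (RR x n / of_nat (Suc n)^2) \<le> pi^2/6 * (1 / real (Suc n)^2)"
proof -
  have "norm (RR x n / of_nat (Suc n)^2) = RR x n / of_nat (Suc n)^2"
    using RR_bounds[OF assms, of n] by simp
  also have "\<dots> \<le> (pi^2/6) / of_nat (Suc n)^2"
    using RR_bounds[OF assms, of n] by (intro divide_right_mono) auto
  finally show ?thesis by simp
qed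

lemma RR_summable:
  assumes "\<bar>x\<bar> < 1"
  shows "summable (\<lambda>n. RR x n / of_nat (Suc n)^2)"
proof (rule summable_comparison_test)
  show "summable (\<lambda>n. pi^2/6 * (1 / real (Suc n)^2))"
    by (intro summable_mult z2_summable)
  show "\<exists>N. \<forall>n\<ge>N. norm (RR x n / of_nat (Suc n)^2) \<le> pi^2/6 * (1 / real (Suc n)^2)"
    using RR_term_bound[OF assms] by blast
qed

lemma FF_eq:
  assumes "\<bar>x\<bar> < 1" "x \<noteq> 0"
  shows "FF x = (pi^2/6 - (1 - sin (pi * x) / (pi * x)) / x^2) / x^2"
proof -
  have "(\<lambda>n. 1 / real (Suc n)^2 - x^2 * (RR x n / of_nat (Suc n)^2)) sums (pi^2/6 - x^2 * FF x)"
    unfolding FF_def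
    by (intro sums_diff z2_sums sums_mult summable_sums RR_summable assms)
  also have "(\<lambda>n. 1 / real (Suc n)^2 - x^2 * (RR x n / of_nat (Suc n)^2))
      = (\<lambda>n. PP x n / of_nat (Suc n)^2)"
    by (rule ext) (simp add: PP_RR diff_divide_distrib)
  finally have "(1 - sin (pi * x) / (pi * x)) / x^2 = pi^2/6 - x^2 * FF x"
    using PP_sums[OF assms(2)] sums_unique2 by blast
  then show ?thesis using assms(2) by (simp add: field_simps)
qed

lemma FF_cont: "continuous_on (ball 0 1) FF"
proof (rule uniform_limit_theorem; (intro always_eventually allI)?)
  show "uniform_limit (ball 0 1) (\<lambda>n x. \<Sum>k<n. RR x k / of_nat (Suc k)^2) FF sequentially"
  proof (unfold FF_def, rule Weierstrass_m_test)
    fix n :: nat and x :: real assume x: "x \<in> ball 0 1"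
    then have "\<bar>x\<bar> < 1" by auto
    then show "norm (RR x n / of_nat (Suc n)^2) \<le> pi^2/6 * (1 / real (Suc n)^2)"
      using RR_term_bound by blast
  next
    show "summable (\<lambda>n. pi^2/6 * (1 / real (Suc n)^2))"
      by (intro summable_mult z2_summable)
  qed
qed (auto simp: RR_def PP_def intro!: continuous_intros)

lemma aux_alg:
  fixes p x A :: real
  assumes "p \<noteq> 0" "x \<noteq> 0"
  shows "(p^2/6 - A / x^2) / x^2 = p^4 * ((1/6 - A/(p*x)^2)/(p*x)^2)"
  using assms by (simp add: field_simps power2_eq_square power4_eq_xxxx)

lemma FF0: "FF 0 = pi^4/120"
proof -
  have "isCont FF 0" using FF_cont by (subst (asm) continuous_on_eq_continuous_at) simp_all
  hence l1: "FF \<midarrow>0\<rightarrow> FF 0" by (simp add: isCont_def)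
  define \<phi> where "\<phi> = (\<lambda>y::real. (1/6 - (1 - sin y/y)/y^2)/y^2)"
  have r: "(\<phi> \<longlongrightarrow> 1/120) (at_right 0)" unfolding \<phi>_def by real_asymp
  have l: "(\<phi> \<longlongrightarrow> 1/120) (at_left 0)" unfolding \<phi>_def by real_asymp
  have lc: "\<phi> \<midarrow>0\<rightarrow> 1/120" using r l by (simp add: filterlim_split_at)
  have lm: "(\<lambda>x. pi * x) \<midarrow>(0::real)\<rightarrow> 0" by (auto intro!: tendsto_eq_intros)
  have li: "\<exists>d>0. \<forall>x::real. x \<noteq> 0 \<and> norm (x - 0) < d \<longrightarrow> pi * x \<noteq> 0"
    by (intro exI[of _ 1]) simp
  have "(\<lambda>x. \<phi> (pi * x)) \<midarrow>0\<rightarrow> 1/120"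
    using LIM_compose2[OF lm lc li] by simp
  then have l2: "(\<lambda>x. pi^4 * \<phi> (pi * x)) \<midarrow>0\<rightarrow> pi^4 * (1/120)"
    by (intro tendsto_mult tendsto_const)
  have ev: "\<forall>\<^sub>F x in at 0. pi^4 * \<phi> (pi * x) = FF x"
  proof -
    have "\<forall>\<^sub>F x in at (0::real). x \<in> ball 0 1 \<and> x \<noteq> 0"
      unfolding eventually_at by (intro exI[of _ 1]) (auto simp: dist_real_def)
    then show ?thesis
    proof eventually_elim
      case (elim x)
      then have "\<bar>x\<bar> < 1" by auto
      then have "FF x = (pi^2/6 - (1 - sin (pi * x) / (pi * x)) / x^2) / x^2"
        using elim FF_eq[of x] by simp
      also have "\<dots> = pi^4 * \<phi> (pi * x)"
        unfolding \<phi>_def using elim pi_gt_zero by (intro aux_alg) auto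
      finally show ?case by simp
    qed
  qed
  have "FF \<midarrow>0\<rightarrow> pi^4 * (1/120)"
    using Lim_transform_eventually[OF l2 ev] .
  with l1 show ?thesis using LIM_unique by fastforce
qed

definition HH :: "nat \<Rightarrow> real" where "HH n = (\<Sum>k<n. 1 / real (Suc k)^2)"

lemma HH_RR: "RR 0 n = HH n"
  by (simp add: RR_def HH_def PP_def)

lemma HH_sq: "HH N ^ 2 = (\<Sum>n<N. 2 * (HH n / real (Suc n)^2) + 1 / real (Suc n)^4)"
proof (induction N)
  case 0 then show ?case by (simp add: HH_def)
next
  case (Suc N)
  have "HH (Suc N) = HH N + 1 / real (Suc N)^2" by (simp add: HH_def)
  moreover have "(HH N + 1 / real (Suc N)^2)^2 = HH N^2 + 2 * (HH N * (1 / real (Suc N)^2)) + (1 / real (Suc N)^2)^2"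
    by algebra
  moreover have "(1 / real (Suc N)^2)^2 = 1 / real (Suc N)^4"
    by (simp add: power_divide flip: power_mult)
  ultimately have "HH (Suc N)^2 = HH N^2 + 2 * (HH N / real (Suc N)^2) + 1 / real (Suc N)^4"
    by simp
  then show ?case using Suc by simp
qed

theorem zeta4_sums: "(\<lambda>n. 1 / real (Suc n)^4) sums (pi^4/90)"
proof -
  have sm: "summable (\<lambda>n. HH n / real (Suc n)^2)"
    using RR_summable[of 0] by (simp add: HH_RR)
  have eq: "(\<Sum>n. HH n / real (Suc n)^2) = pi^4/120"
    using FF0 unfolding FF_def by (simp add: HH_RR)
  have s: "(\<lambda>n. HH n / real (Suc n)^2) sums (pi^4/120)"
    by (subst eq[symmetric]) (rule summable_sums[OF sm])
  have "(\<lambda>N. HH N) \<longlonglongrightarrow> pi^2/6"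
    using z2_sums unfolding sums_def HH_def .
  then have t1: "(\<lambda>N. HH N ^ 2) \<longlonglongrightarrow> (pi^2/6)^2" by (intro tendsto_intros)
  have t2: "(\<lambda>N. \<Sum>n<N. 2 * (HH n / real (Suc n)^2)) \<longlonglongrightarrow> 2 * (pi^4/120)"
    using sums_mult[OF s, of 2] unfolding sums_def .
  have "(\<lambda>N. HH N ^ 2 - (\<Sum>n<N. 2 * (HH n / real (Suc n)^2))) \<longlonglongrightarrow> (pi^2/6)^2 - 2 * (pi^4/120)"
    by (intro tendsto_diff t1 t2)
  also have "(\<lambda>N. HH N ^ 2 - (\<Sum>n<N. 2 * (HH n / real (Suc n)^2))) = (\<lambda>N. \<Sum>n<N. 1 / real (Suc n)^4)"
    by (rule ext) (simp add: HH_sq sum.distrib)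
  also have "(pi^2/6)^2 - 2 * (pi^4/120) = pi^4/90"
    by (simp add: power2_eq_square power4_eq_xxxx field_simps)
  finally show ?thesis unfolding sums_def .
qed


lemma sqf_pos: "squarefree (m::nat) \<Longrightarrow> m > 0"
  by (cases m) auto

lemma mult_sq_decomp:
  fixes m j :: nat assumes m: "squarefree m" and j: "j > 0"
  shows "squarefree_part (m * j^2) = m \<and> square_part (m * j^2) = j"
proof -
  have m0: "m \<noteq> 0" using sqf_pos[OF m] by simp
  have k0: "m * j^2 \<noteq> 0" using m0 j by simp
  have mult: "multiplicity p (m * j^2) = multiplicity p m + 2 * multiplicity p j" if "prime p" for p
    using that m0 j by (simp add: prime_elem_multiplicity_mult_distrib prime_elem_multiplicity_power_distrib)
  have le: "multiplicity p m \<le> 1" if "prime p" for p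
    using m m0 that squarefree_factorial_semiring'' by blast
  have "normalize (square_part (m*j^2)) = normalize j"
  proof (rule multiplicity_eq_imp_eq)
    show "square_part (m*j^2) \<noteq> 0" using k0 by simp
    show "j \<noteq> 0" using j by simp
    fix p :: nat assume p: "prime p"
    show "multiplicity p (square_part (m*j^2)) = multiplicity p j"
      using mult[OF p] le[OF p] by (simp add: prime_multiplicity_square_part[OF p])
  qed
  moreover have "normalize (squarefree_part (m*j^2)) = normalize m"
  proof (rule multiplicity_eq_imp_eq)
    show "squarefree_part (m*j^2) \<noteq> 0" by simp
    show "m \<noteq> 0" using m0 by simp
    fix p :: nat assume p: "prime p"
    show "multiplicity p (squarefree_part (m*j^2)) = multiplicity p m"
      using mult[OF p] le[OF p] by (simp add: prime_multiplicity_squarefree_part[OF p])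
  qed
  ultimately show ?thesis by simp
qed

lemma pos_reindex_has_sum:
  assumes "(\<lambda>n. f (Suc n)) sums s" "\<And>n. f n \<ge> (0::real)"
  shows "(f has_sum s) {k. k > 0}"
proof -
  have "((\<lambda>n. f (Suc n)) has_sum s) UNIV"
    by (rule sums_nonneg_imp_has_sum) (use assms in auto)
  moreover have "((\<lambda>n. f (Suc n)) has_sum s) UNIV \<longleftrightarrow> (f has_sum s) {k. k > 0}"
    by (rule has_sum_reindex_bij_witness[where i="\<lambda>k. k - 1" and j=Suc]) auto
  ultimately show ?thesis by simp
qed

lemma Q_has_sum_sqf: "((\<lambda>m::nat. 1 / real m ^ 2) has_sum (15 / pi^2)) {m. squarefree m}"
proof -
  have h1: "((\<lambda>k::nat. 1 / real k^2) has_sum pi^2/6) {k. k>0}"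
    by (rule pos_reindex_has_sum) (use z2_sums in auto)
  have h2: "((\<lambda>k::nat. 1 / real k^4) has_sum pi^4/90) {k. k>0}"
    by (rule pos_reindex_has_sum) (use zeta4_sums in auto)
  define S where "S = Sigma {m::nat. squarefree m} (\<lambda>_. {j::nat. j>0})"
  have "((\<lambda>(m,j). 1 / real (m*j^2)^2) has_sum pi^2/6) S \<longleftrightarrow> ((\<lambda>k::nat. 1 / real k^2) has_sum pi^2/6) {k. k>0}"
  proof (rule has_sum_reindex_bij_witness[where i="\<lambda>k. (squarefree_part k, square_part k)" and j="\<lambda>(m,j). m*j^2"])
    fix a assume "a \<in> S"
    then obtain m j where a: "a = (m,j)" "squarefree m" "j > 0" unfolding S_def by auto
    then show "(squarefree_part ((\<lambda>(m,j). m*j^2) a), square_part ((\<lambda>(m,j). m*j^2) a)) = a"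
      using mult_sq_decomp[of m j] by simp
    have "m \<noteq> 0" using a sqf_pos by auto
    then show "(\<lambda>(m,j). m*j^2) a \<in> {k. k>0}" using a by simp
    show "1 / real ((\<lambda>(m,j). m*j^2) a)^2 = (\<lambda>(m,j). 1 / real (m*j^2)^2) a" using a by simp
  next
    fix b :: nat assume b: "b \<in> {k. k>0}"
    show "(\<lambda>(m,j). m*j^2) (squarefree_part b, square_part b) = b"
      by (simp flip: squarefree_decompose)
    have "square_part b \<noteq> 0" using b square_part_0_iff[of b] by auto
    then show "(squarefree_part b, square_part b) \<in> S" unfolding S_def by (simp del: square_part_0_iff)
  qed simp
  with h1 have h3: "((\<lambda>(m,j). 1 / real (m*j^2)^2) has_sum pi^2/6) S" by simp
  have h4: "((\<lambda>j. (\<lambda>(m,j). 1 / real (m*j^2)^2) (m,j)) has_sum (1 / real m^2 * (pi^4/90))) {j. j>0}"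
    for m :: nat
  proof -
    have "((\<lambda>j. 1 / real m^2 * (1 / real j^4)) has_sum (1 / real m^2 * (pi^4/90))) {j. j>0}"
      by (rule has_sum_cmult_right[OF h2])
    moreover have "1 / real m^2 * (1 / real j^4) = (\<lambda>(m,j). 1 / real (m*j^2)^2) (m,j)" for j
      by (simp add: power_mult_distrib flip: power_mult)
    ultimately show ?thesis by simp
  qed
  have h5: "((\<lambda>m. 1 / real m^2 * (pi^4/90)) has_sum pi^2/6) {m. squarefree m}"
    by (rule has_sum_SigmaD[OF h3[unfolded S_def]]) (rule h4)
  have h6: "((\<lambda>m. (90 / pi^4) * (1 / real m^2 * (pi^4/90))) has_sum ((90/pi^4) * (pi^2/6))) {m. squarefree m}"
    by (rule has_sum_cmult_right[OF h5])
  moreover have "(90/pi^4) * (pi^2/6) = 15 / pi^2"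
    by (simp add: field_simps power2_eq_square power4_eq_xxxx)
  moreover have "(90 / pi^4) * (1 / real m^2 * (pi^4/90)) = 1 / real m^2" for m
    by (simp add: field_simps)
  ultimately show ?thesis by simp
qed

lemma Q_has_sum: "((\<lambda>m::nat. if squarefree m then 1 / real m ^ 2 else 0) has_sum (15 / pi^2)) UNIV"
  using Q_has_sum_sqf by (subst has_sum_cong_neutral[where T="{m. squarefree m}" and g="\<lambda>m. 1 / real m ^ 2"]) auto


lemma liouville_mult: "a \<noteq> 0 \<Longrightarrow> b \<noteq> 0 \<Longrightarrow> liouville (a*b) = liouville a * liouville b"
  by (simp add: liouville_def prime_factorization_mult power_add)

lemma liouville_prime: "prime p \<Longrightarrow> liouville p = -1"
  by (simp add: liouville_def prime_factorization_prime)

lemma liouville_1: "liouville 1 = 1" by (simp add: liouville_def)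

lemma liouville_sq: "liouville m * liouville m = 1"
proof -
  have "((-1::real)^k) * (-1)^k = 1" for k
    by (simp flip: power_mult_distrib)
  then show ?thesis by (simp add: liouville_def)
qed

definition mu :: "nat \<Rightarrow> real" where "mu m = (if squarefree m then liouville m else 0)"

lemma sqf_pos': "squarefree (m::nat) \<Longrightarrow> m > 0"
  by (cases m) auto

lemma mu_swap_dvd:
  assumes p: "prime p" "p dvd m" and d: "d dvd m" "squarefree d" and pd: "p dvd d"
  shows "d div p dvd m \<and> squarefree (d div p) \<and> \<not> p dvd (d div p) \<and> mu (d div p) = - mu d"
proof -
  define e where "e = d div p"
  have de: "d = p * e" using pd unfolding e_def by simp
  have "d > 0" using sqf_pos' d(2) by simp
  then have e0: "e \<noteq> 0" using de by auto
  have "p \<noteq> 0" using p by auto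
  have npe: "\<not> p dvd e"
  proof
    assume "p dvd e"
    then have "p^2 dvd d" using de by (simp add: power2_eq_square)
    then have "p dvd 1" using d(2) squarefreeD by blast
    with p show False by auto
  qed
  have "e dvd d" using de by simp
  then have "e dvd m" "squarefree e" using d dvd_trans squarefree_mono by blast+
  moreover have "mu d = - mu e"
    using d(2) \<open>squarefree e\<close> e0 \<open>p \<noteq> 0\<close> p(1)
    by (simp add: mu_def de liouville_mult liouville_prime)
  ultimately show ?thesis using npe unfolding e_def by simp
qed

lemma mu_swap_ndvd:
  assumes p: "prime p" "p dvd m" and d: "d dvd m" "squarefree d" and pd: "\<not> p dvd d"
  shows "d * p dvd m \<and> squarefree (d * p) \<and> mu (d * p) = - mu d"
proof -
  have cop: "coprime d p" using prime_imp_coprime[OF p(1) pd] by (simp add: coprime_commute)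
  have "d * p dvd m" by (rule divides_mult[OF d(1) p(2) cop])
  moreover have "squarefree (d * p)"
    by (rule squarefree_mult_coprime[OF cop d(2) squarefree_prime[OF p(1)]])
  moreover have "d \<noteq> 0" "p \<noteq> 0" using sqf_pos'[OF d(2)] p by auto
  ultimately show ?thesis using d(2) p(1)
    by (simp add: mu_def liouville_mult liouville_prime)
qed

lemma mu_sum:
  assumes "m > 0"
  shows "(\<Sum>d | d dvd m. mu d) = (if m = 1 then 1 else 0)"
proof (cases "m = 1")
  case True
  have "{d::nat. d dvd 1} = {1}" by auto
  then show ?thesis using True by (simp add: mu_def liouville_def)
next
  case False
  then obtain p where p: "prime p" "p dvd m" using prime_factor_nat by blast
  define A where "A = {d. d dvd m \<and> squarefree d}"
  have fin: "finite {d. d dvd m}" using assms by (simp add: finite_divisors_nat)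
  have eq1: "(\<Sum>d | d dvd m. mu d) = sum mu A"
    by (rule sum.mono_neutral_right) (use fin in \<open>auto simp: A_def mu_def\<close>)
  define \<sigma> where "\<sigma> d = (if p dvd d then d div p else d * p)" for d
  have \<sigma>A: "\<sigma> d \<in> A \<and> \<sigma> (\<sigma> d) = d \<and> mu (\<sigma> d) = - mu d" if "d \<in> A" for d
  proof (cases "p dvd d")
    case True
    with mu_swap_dvd[OF p, of d] that have "d div p dvd m \<and> squarefree (d div p) \<and> \<not> p dvd (d div p) \<and> mu (d div p) = - mu d"
      unfolding A_def by auto
    moreover have "d div p * p = d" using True by simp
    ultimately show ?thesis using True unfolding \<sigma>_def A_def by auto
  next
    case False
    with mu_swap_ndvd[OF p, of d] that have "d * p dvd m \<and> squarefree (d * p) \<and> mu (d * p) = - mu d"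
      unfolding A_def by auto
    moreover have "d * p div p = d" using p by simp
    ultimately show ?thesis using False unfolding \<sigma>_def A_def by auto
  qed
  have "sum mu A = sum (\<lambda>d. mu (\<sigma> d)) A"
    by (rule sum.reindex_bij_witness[where i=\<sigma> and j=\<sigma>]) (use \<sigma>A in auto)
  also have "\<dots> = sum (\<lambda>d. - mu d) A"
    by (rule sum.cong) (use \<sigma>A in auto)
  also have "\<dots> = - sum mu A" by (simp add: sum_negf)
  finally have "sum mu A = 0" by simp
  with eq1 False show ?thesis by simp
qed

lemma cis_pow_eq_1:
  assumes s: "s > 0" and w: "cis (2 * pi / real s) ^ n = 1"
  shows "s dvd n"
proof -
  have "cis (real n * (2 * pi / real s)) = 1" using w by (simp add: Complex.DeMoivre)
  then have "exp (\<i> * complex_of_real (real n * (2 * pi / real s))) = 1" by (simp add: cis_conv_exp)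
  then obtain k :: int where k: "real n * (2 * pi / real s) = real_of_int (2 * k) * pi"
    by (auto simp: exp_eq_1)
  then have "real n = real s * real_of_int k" using s pi_gt_zero
    by (simp add: field_simps)
  then have "int n = int s * k"
    by (metis of_int_eq_iff of_int_mult of_int_of_nat_eq)
  then have "int s dvd int n" by simp
  then show ?thesis by simp
qed

lemma root_unity_sum:
  assumes s: "s > 0"
  shows "(\<Sum>i=1..s. cis (2*pi*real i/real s) ^ n) = (if s dvd n then of_nat s else 0)"
proof -
  define z where "z = cis (2*pi/real s)"
  define w where "w = z ^ n"
  have zi: "cis (2*pi*real i/real s) = z^i" for i
  proof -
    have "z^i = cis (real i * (2*pi/real s))" unfolding z_def by (rule Complex.DeMoivre)
    moreover have "real i * (2*pi/real s) = 2*pi*real i/real s" by simp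
    ultimately show ?thesis by metis
  qed
  have trm: "cis (2*pi*real i/real s) ^ n = w^i" for i
    unfolding zi w_def by (simp flip: power_mult add: mult.commute)
  have zs: "z ^ s = 1"
  proof -
    have "z ^ s = cis (real s * (2*pi/real s))" unfolding z_def by (simp add: Complex.DeMoivre)
    also have "real s * (2*pi/real s) = 2 * pi * 1" using s by simp
    also have "cis (2 * pi * 1) = 1" by (rule cis_multiple_2pi) simp
    finally show ?thesis .
  qed
  have "(z ^ n) ^ s = (z ^ s) ^ n" by (simp flip: power_mult add: mult.commute)
  then have ws: "w ^ s = 1" unfolding w_def using zs by simp
  show ?thesis
  proof (cases "s dvd n")
    case True
    then obtain q where "n = s * q" by auto
    then have "w = 1" unfolding w_def using zs by (simp add: power_mult)
    then show ?thesis using True by (simp add: trm)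
  next
    case False
    have w1: "w \<noteq> 1" using cis_pow_eq_1[OF s] False unfolding w_def z_def by blast
    have "(\<Sum>i=1..s. cis (2*pi*real i/real s) ^ n) = (\<Sum>i=Suc 0..s. w^i)" by (simp add: trm)
    also have "\<dots> = (\<Sum>i<s. w ^ Suc i)" by (rule sum.atLeast1_atMost_eq)
    also have "\<dots> = w * (\<Sum>i<s. w ^ i)" by (simp add: sum_distrib_left)
    also have "(\<Sum>i<s. w ^ i) = 0"
    proof -
      have "(w - 1) * (\<Sum>i<s. w ^ i) = 0" using ws power_diff_1_eq[of w s] by simp
      then show ?thesis using w1 by simp
    qed
    finally show ?thesis using False by simp
  qed
qed

lemma divisor_sum_flip:
  assumes r: "r > (0::nat)"
  shows "(\<Sum>d | d dvd r. f d) = (\<Sum>e | e dvd r. f (r div e))"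
proof -
  have h: "r div (r div d) = d \<and> r div d dvd r" if "d dvd r" for d
  proof -
    from that obtain s where rs: "r = d * s" by auto
    then have "d > 0" "s > 0" using r by auto
    then show ?thesis using rs by auto
  qed
  show ?thesis
    by (rule sum.reindex_bij_witness[where i="\<lambda>d. r div d" and j="\<lambda>d. r div d"]) (use h in auto)
qed

lemma ramanujan_formula:
  assumes r: "r > 0" and n: "n > 0"
  shows "ramanujan_sum r n = of_real (\<Sum>e | e dvd n. if e dvd r then real e * mu (r div e) else 0)"
proof -
  define w where "w k = cis (2 * pi * real k / real r) ^ n" for k
  have finr: "finite {d. d dvd r}" using r by (simp add: finite_divisors_nat)
  have finn: "finite {d. d dvd n}" using n by (simp add: finite_divisors_nat)
  have "ramanujan_sum r n = (\<Sum>k\<in>{1..r}. if coprime k r then w k else 0)"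
    unfolding ramanujan_sum_def w_def by (rule sum.inter_filter) simp
  also have "\<dots> = (\<Sum>k\<in>{1..r}. \<Sum>d\<in>{d. d dvd r}. if d dvd k then of_real (mu d) * w k else 0)"
  proof (rule sum.cong[OF refl])
    fix k assume k: "k \<in> {1..r}"
    have g0: "gcd k r > 0" using r by simp
    have "(\<Sum>d\<in>{d. d dvd r}. if d dvd k then mu d else 0) = (\<Sum>d | d dvd gcd k r. mu d)"
      using finr by (simp add: sum.inter_filter[symmetric]) (rule sum.cong, auto)
    also have "\<dots> = (if coprime k r then 1 else 0)"
      using mu_sum[OF g0] by (simp add: coprime_iff_gcd_eq_1)
    finally have e: "(\<Sum>d\<in>{d. d dvd r}. if d dvd k then mu d else 0) = (if coprime k r then 1 else 0)" .
    have "(\<Sum>d\<in>{d. d dvd r}. if d dvd k then of_real (mu d) * w k else 0)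
        = (\<Sum>d\<in>{d. d dvd r}. of_real (if d dvd k then mu d else 0) * w k)"
      by (rule sum.cong) auto
    also have "\<dots> = of_real (\<Sum>d\<in>{d. d dvd r}. if d dvd k then mu d else 0) * w k"
      by (simp only: of_real_sum sum_distrib_right)
    also have "\<dots> = (if coprime k r then w k else 0)" by (simp add: e)
    finally show "(if coprime k r then w k else 0) = (\<Sum>d\<in>{d. d dvd r}. if d dvd k then of_real (mu d) * w k else 0)" ..
  qed
  also have "\<dots> = (\<Sum>d\<in>{d. d dvd r}. \<Sum>k\<in>{1..r}. if d dvd k then of_real (mu d) * w k else 0)"
    by (rule sum.swap)
  also have "\<dots> = (\<Sum>d\<in>{d. d dvd r}. of_real (mu d) * (if (r div d) dvd n then of_nat (r div d) else 0))"
  proof (rule sum.cong[OF refl])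
    fix d assume "d \<in> {d. d dvd r}"
    then obtain s where rs: "r = d * s" by auto
    then have d0: "d > 0" and s0: "s > 0" using r by auto
    have rd: "r div d = s" using rs d0 by simp
    have "(\<Sum>k\<in>{1..r}. if d dvd k then of_real (mu d) * w k else 0) = (\<Sum>k\<in>{k\<in>{1..r}. d dvd k}. of_real (mu d) * w k)"
      by (rule sum.inter_filter[symmetric]) simp
    also have "\<dots> = of_real (mu d) * (\<Sum>k\<in>{k\<in>{1..r}. d dvd k}. w k)"
      by (rule sum_distrib_left[symmetric])
    also have "{k\<in>{1..r}. d dvd k} = (\<lambda>i. d * i) ` {1..s}"
    proof (intro equalityI subsetI)
      fix k assume "k \<in> {k\<in>{1..r}. d dvd k}"
      then obtain i where "k = d * i" "1 \<le> k" "k \<le> r" by auto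
      then have "i \<in> {1..s}" using rs d0 by (auto simp: mult_le_cancel1)
      then show "k \<in> (\<lambda>i. d * i) ` {1..s}" using \<open>k = d * i\<close> by auto
    next
      fix k assume "k \<in> (\<lambda>i. d * i) ` {1..s}"
      then obtain i where "k = d * i" "i \<in> {1..s}" by blast
      then show "k \<in> {k\<in>{1..r}. d dvd k}" using rs d0 by (auto simp: mult_le_cancel1)
    qed
    also have "(\<Sum>k\<in>(\<lambda>i. d * i) ` {1..s}. w k) = (\<Sum>i\<in>{1..s}. w (d * i))"
      by (subst sum.reindex) (use d0 in \<open>auto simp: inj_on_def\<close>)
    also have "\<dots> = (\<Sum>i=1..s. cis (2*pi*real i/real s) ^ n)"
    proof (rule sum.cong[OF refl])
      fix i
      have "2 * pi * real (d * i) / real r = 2*pi*real i/real s"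
        using rs d0 by (simp add: field_simps)
      then show "w (d * i) = cis (2*pi*real i/real s) ^ n" unfolding w_def by simp
    qed
    also have "\<dots> = (if s dvd n then of_nat s else 0)" by (rule root_unity_sum[OF s0])
    finally show "(\<Sum>k\<in>{1..r}. if d dvd k then of_real (mu d) * w k else 0)
        = of_real (mu d) * (if (r div d) dvd n then of_nat (r div d) else 0)" by (simp add: rd)
  qed
  also have "\<dots> = (\<Sum>e\<in>{e. e dvd r}. of_real (mu (r div e)) * (if e dvd n then of_nat e else 0))"
  proof -
    have "(\<Sum>d\<in>{d. d dvd r}. of_real (mu d) * (if (r div d) dvd n then of_nat (r div d) else 0) :: complex)
        = (\<Sum>e\<in>{e. e dvd r}. of_real (mu (r div e)) * (if (r div (r div e)) dvd n then of_nat (r div (r div e)) else 0))"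
      by (rule divisor_sum_flip[OF r])
    also have "\<dots> = (\<Sum>e\<in>{e. e dvd r}. of_real (mu (r div e)) * (if e dvd n then of_nat e else 0))"
    proof (rule sum.cong[OF refl])
      fix e assume "e \<in> {e. e dvd r}"
      then obtain s where rs: "r = e * s" by auto
      then have "e > 0" "s > 0" using r by auto
      then have "r div (r div e) = e" using rs by simp
      then show "(of_real (mu (r div e)) * (if (r div (r div e)) dvd n then of_nat (r div (r div e)) else 0) :: complex)
          = of_real (mu (r div e)) * (if e dvd n then of_nat e else 0)" by simp
    qed
    finally show ?thesis .
  qed
  also have "\<dots> = of_real (\<Sum>e\<in>{e. e dvd r}. if e dvd n then real e * mu (r div e) else 0)"
    by (simp add: of_real_sum if_distrib cong: if_cong) (rule sum.cong, auto)
  also have "(\<Sum>e\<in>{e. e dvd r}. if e dvd n then real e * mu (r div e) else 0)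
      = (\<Sum>e\<in>{e. e dvd n}. if e dvd r then real e * mu (r div e) else 0)"
  proof -
    have "(\<Sum>e\<in>{e. e dvd r}. if e dvd n then real e * mu (r div e) else 0)
        = (\<Sum>e\<in>{e\<in>{e. e dvd r}. e dvd n}. real e * mu (r div e))"
      by (rule sum.inter_filter[symmetric, OF finr])
    also have "{e\<in>{e. e dvd r}. e dvd n} = {e\<in>{e. e dvd n}. e dvd r}" by auto
    also have "(\<Sum>e\<in>{e\<in>{e. e dvd n}. e dvd r}. real e * mu (r div e))
        = (\<Sum>e\<in>{e. e dvd n}. if e dvd r then real e * mu (r div e) else 0)"
      by (rule sum.inter_filter[OF finn])
    finally show ?thesis .
  qed
  finally show ?thesis by simp
qed

lemma has_sum_finsum:
  fixes f :: "'i \<Rightarrow> 'a \<Rightarrow> real"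
  assumes "finite I" "\<And>i. i \<in> I \<Longrightarrow> (f i has_sum s i) A"
  shows "((\<lambda>x. \<Sum>i\<in>I. f i x) has_sum (\<Sum>i\<in>I. s i)) A"
  using assms by (induction I rule: finite_induct) (auto intro!: has_sum_add)

definition GG :: "nat \<Rightarrow> nat \<Rightarrow> real" where
  "GG e r = (if e dvd r then liouville r / real r ^ 2 * (real e * mu (r div e)) else 0)"

lemma GG_mult:
  assumes e: "e > 0"
  shows "GG e (e * m) = liouville e / real e * (if squarefree m then 1 / real m ^ 2 else 0)"
proof (cases "m = 0")
  case True
  then show ?thesis by (simp add: GG_def)
next
  case False
  have "GG e (e * m) = liouville e * liouville m / (real e ^ 2 * real m ^ 2) * (real e * mu m)"
    using e False by (simp add: GG_def liouville_mult power_mult_distrib)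
  also have "\<dots> = liouville e / real e * ((liouville m * mu m) / real m ^ 2)"
    using e False by (simp add: field_simps power2_eq_square)
  also have "liouville m * mu m = (if squarefree m then 1 else 0)"
    by (simp add: mu_def liouville_sq)
  finally show ?thesis by simp
qed

lemma GG_has_sum:
  assumes e: "e > 0"
  shows "(GG e has_sum (liouville e / real e * (15 / pi^2))) UNIV"
proof -
  have "(GG e has_sum (liouville e / real e * (15 / pi^2))) UNIV \<longleftrightarrow>
        (GG e has_sum (liouville e / real e * (15 / pi^2))) (range (\<lambda>m. e * m))"
    by (rule has_sum_cong_neutral) (auto simp: GG_def)
  also have "\<dots> \<longleftrightarrow> ((GG e \<circ> (\<lambda>m. e * m)) has_sum (liouville e / real e * (15 / pi^2))) UNIV"
    by (rule has_sum_reindex) (use e in \<open>auto simp: inj_on_def\<close>)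
  also have "GG e \<circ> (\<lambda>m. e * m) = (\<lambda>m. liouville e / real e * (if squarefree m then 1 / real m ^ 2 else 0))"
    by (rule ext) (simp add: GG_mult[OF e])
  finally have iff: "(GG e has_sum (liouville e / real e * (15 / pi^2))) UNIV \<longleftrightarrow>
     ((\<lambda>m. liouville e / real e * (if squarefree m then 1 / real m ^ 2 else 0)) has_sum (liouville e / real e * (15 / pi^2))) UNIV" .
  show ?thesis using iff has_sum_cmult_right[OF Q_has_sum, of "liouville e / real e"] by blast
qed

lemma beta_eq:
  assumes n: "n > 0"
  shows "beta n / real n = (\<Sum>e | e dvd n. liouville e / real e)"
proof -
  have "beta n = (\<Sum>e | e dvd n. real (n div e) * liouville (n div (n div e)))"
    unfolding beta_def by (rule divisor_sum_flip[OF n])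
  also have "\<dots> = (\<Sum>e | e dvd n. real n * (liouville e / real e))"
  proof (rule sum.cong[OF refl])
    fix e assume "e \<in> {e. e dvd n}"
    then obtain s where rs: "n = e * s" by auto
    then have "e > 0" "s > 0" using n by auto
    then show "real (n div e) * liouville (n div (n div e)) = real n * (liouville e / real e)"
      using rs by simp
  qed
  also have "\<dots> = real n * (\<Sum>e | e dvd n. liouville e / real e)"
    by (rule sum_distrib_left[symmetric])
  finally show ?thesis using n by simp
qed

theorem mainTheorem4:
  fixes n :: nat
  assumes "n \<ge> 1"
  shows "summable (\<lambda>r. norm (complex_of_real (liouville (Suc r) / real (Suc r) ^ 2)
                                * ramanujan_sum (Suc r) n))
       \<and> complex_of_real (beta n / real n) =
           complex_of_real (pi ^ 2 / 15) *
             (\<Sum>r. complex_of_real (liouville (Suc r) / real (Suc r) ^ 2)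
                     * ramanujan_sum (Suc r) n)"
proof -
  have n: "n > 0" using assms by simp
  define D where "D = {e::nat. e dvd n}"
  have finD: "finite D" unfolding D_def using n by (simp add: finite_divisors_nat)
  define S where "S r = (\<Sum>e\<in>D. GG e r)" for r
  define V where "V = (\<Sum>e\<in>D. liouville e / real e * (15 / pi^2))"
  have hs: "(S has_sum V) UNIV"
    unfolding S_def V_def
    by (rule has_sum_finsum[OF finD]) (rule GG_has_sum, use n in \<open>auto simp: D_def intro: dvd_pos_nat\<close>)
  have term_eq: "complex_of_real (liouville (Suc r) / real (Suc r) ^ 2) * ramanujan_sum (Suc r) n
      = of_real (S (Suc r))" for r
  proof -
    have "complex_of_real (liouville (Suc r) / real (Suc r) ^ 2) * ramanujan_sum (Suc r) n
        = of_real (liouville (Suc r) / real (Suc r) ^ 2 *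
            (\<Sum>e\<in>D. if e dvd Suc r then real e * mu (Suc r div e) else 0))"
      using ramanujan_formula[of "Suc r" n] n unfolding D_def by simp
    also have "liouville (Suc r) / real (Suc r) ^ 2 *
            (\<Sum>e\<in>D. if e dvd Suc r then real e * mu (Suc r div e) else 0) = S (Suc r)"
      unfolding S_def GG_def sum_distrib_left by (rule sum.cong) auto
    finally show ?thesis .
  qed
  have "S summable_on UNIV" using hs by (rule has_sum_imp_summable)
  then have "(\<lambda>r. norm (S r)) summable_on UNIV"
    using summable_on_iff_abs_summable_on_real by blast
  then have "summable (\<lambda>r. norm (S r))" by (rule summable_on_imp_summable)
  then have sm: "summable (\<lambda>r. norm (S (Suc r)))" by (subst summable_Suc_iff)
  have S0: "S 0 = 0" unfolding S_def GG_def by simp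
  have "S sums V" using hs by (rule has_sum_imp_sums)
  then have "(\<lambda>r. S (Suc r)) sums V" using S0 by (simp add: sums_Suc_iff)
  then have "(\<lambda>r. complex_of_real (S (Suc r))) sums of_real V" by (rule sums_of_real)
  then have sumV: "(\<Sum>r. complex_of_real (liouville (Suc r) / real (Suc r) ^ 2) * ramanujan_sum (Suc r) n) = of_real V"
    unfolding term_eq by (rule sums_unique[symmetric])
  define B where "B = (\<Sum>e\<in>D. liouville e / real e)"
  have V_eq: "V = B * (15/pi^2)" unfolding V_def B_def by (rule sum_distrib_right[symmetric])
  have pi2: "pi^2/15 * (B * (15/pi^2)) = B" using pi_gt_zero by (simp add: field_simps)
  have bB: "beta n / real n = B" using beta_eq[OF n] unfolding B_def D_def .
  have "beta n / real n = pi^2/15 * V" unfolding V_eq pi2 by (rule bB)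
  then have "complex_of_real (beta n / real n) = complex_of_real (pi ^ 2 / 15 * V)"
    by (simp only:)
  also have "\<dots> = complex_of_real (pi ^ 2 / 15) * of_real V" by (rule of_real_mult)
  finally have "complex_of_real (beta n / real n) = complex_of_real (pi ^ 2 / 15) * of_real V" .
  moreover have "summable (\<lambda>r. norm (complex_of_real (liouville (Suc r) / real (Suc r) ^ 2)
                                * ramanujan_sum (Suc r) n))"
    unfolding term_eq norm_of_real using sm unfolding real_norm_def .
  ultimately show ?thesis by (simp only: sumV)
qed

end
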